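(* Let $K$ be a field, let $\Sigma$ be a rational pointed fan in $\mathbb{R}^d$, let $\mathcal{M}_\Sigma$ be a monoidal complex supported by $\Sigma$, and let $C_1,\dots,C_j,D\in\Sigma$. Then in $K[\mathcal{M}_\Sigma]$: (i) $\mathfrak p_{C_1\cap\dots\cap C_j}=\mathfrak p_{C_1}+\dots+\mathfrak p_{C_j}$; (ii) $\mathfrak p_D+\bigcap_{i=1}^t\mathfrak p_{C_i}=\bigcap_{i=1}^t(\mathfrak p_D+\mathfrak p_{C_i})$ (for any $t\le j$ cones $C_1,\dots,C_t$).
   Context: A rational pointed fan $\Sigma$ in $\mathbb{R}^d$ is a finite collection of rational pointed polyhedral cones closed under taking faces, such that the intersection of two cones of $\Sigma$ is a common face of both. A monoidal complex supported by $\Sigma$ is a set $\mathcal{M}_\Sigma=\{M_C\subseteq\mathbb{Z}^d : C\in\Sigma\}$ of affine monoids such that the cone generated by $M_C$ is $C$ and $M_{C'}=M_C\cap C'$ whenever $C'\subseteq C$ are in $\Sigma$. With $|\mathcal{M}_\Sigma|=\bigcup_C M_C$, the toric face ring $K[\mathcal{M}_\Sigma]$ has $K$-basis $\{x^a: a\in|\mathcal{M}_\Sigma|\}$ with $x^ax^b=x^{a+b}$ if $a,b$ lie in a common $M_C$ and $0$ otherwise. For $C\in\Sigma$, $\mathfrak p_C$ is the ideal generated by the $x^a$ with $a\in|\mathcal{M}_\Sigma|\setminus M_C$. *)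

theory Defs
  imports "HOL-Analysis.Analysis" "HOL-Algebra.Ideal" "HOL-Algebra.AbelCoset"
begin

definition real_vec :: "int ^ 'd \<Rightarrow> real ^ 'd" where
  "real_vec a = (\<chi> i. real_of_int (a $ i))"

definition rational_polyhedral_cone :: "(real ^ 'd) set \<Rightarrow> bool" where
  "rational_polyhedral_cone C \<longleftrightarrow>
     (\<exists>V :: (int ^ 'd) set. finite V \<and> C = convex_cone hull (real_vec ` V))"

definition pointed_cone :: "(real ^ 'd) set \<Rightarrow> bool" where
  "pointed_cone C \<longleftrightarrow> C \<inter> uminus ` C = {0}"

definition rational_pointed_fan :: "(real ^ 'd) set set \<Rightarrow> bool" where
  "rational_pointed_fan \<Sigma> \<longleftrightarrow> finite \<Sigma> \<and>
     (\<forall>C\<in>\<Sigma>. rational_polyhedral_cone C \<and> pointed_cone C) \<and>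
     (\<forall>C\<in>\<Sigma>. \<forall>F. F face_of C \<and> F \<noteq> {} \<longrightarrow> F \<in> \<Sigma>) \<and>
     (\<forall>C\<in>\<Sigma>. \<forall>C'\<in>\<Sigma>. (C \<inter> C') face_of C \<and> (C \<inter> C') face_of C')"

inductive_set monoid_gen :: "(int ^ 'd) set \<Rightarrow> (int ^ 'd) set" for G where
  zero: "0 \<in> monoid_gen G"
| add: "g \<in> G \<Longrightarrow> x \<in> monoid_gen G \<Longrightarrow> g + x \<in> monoid_gen G"

definition affine_monoid :: "(int ^ 'd) set \<Rightarrow> bool" where
  "affine_monoid M \<longleftrightarrow> (\<exists>G. finite G \<and> M = monoid_gen G)"

definition monoidal_complex ::
    "(real ^ 'd) set set \<Rightarrow> ((real ^ 'd) set \<Rightarrow> (int ^ 'd) set) \<Rightarrow> bool" where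
  "monoidal_complex \<Sigma> M \<longleftrightarrow>
     (\<forall>C\<in>\<Sigma>. affine_monoid (M C) \<and> convex_cone hull (real_vec ` M C) = C) \<and>
     (\<forall>C\<in>\<Sigma>. \<forall>C'\<in>\<Sigma>. C' \<subseteq> C \<longrightarrow> M C' = M C \<inter> {a. real_vec a \<in> C'})"

definition mc_support ::
    "(real ^ 'd) set set \<Rightarrow> ((real ^ 'd) set \<Rightarrow> (int ^ 'd) set) \<Rightarrow> (int ^ 'd) set" where
  "mc_support \<Sigma> M = (\<Union>C\<in>\<Sigma>. M C)"

text \<open>Toric face ring K[M]: elements are finitely supported K-valued functions on |M|
  (coefficients w.r.t. the basis x^a), with x^a x^b = x^(a+b) if a, b lie in a common M_C
  and 0 otherwise.\<close>
definition toric_face_ring ::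
    "(real ^ 'd) set set \<Rightarrow> ((real ^ 'd) set \<Rightarrow> (int ^ 'd) set) \<Rightarrow> (int ^ 'd \<Rightarrow> 'k::field) ring" where
  "toric_face_ring \<Sigma> M =
     \<lparr>carrier = {f. finite {a. f a \<noteq> 0} \<and> {a. f a \<noteq> 0} \<subseteq> mc_support \<Sigma> M},
      mult = (\<lambda>f g c. \<Sum>p\<in>{(a, b). f a \<noteq> 0 \<and> g b \<noteq> 0 \<and> a + b = c \<and>
                                     (\<exists>C\<in>\<Sigma>. a \<in> M C \<and> b \<in> M C)}. f (fst p) * g (snd p)),
      one = (\<lambda>c. if c = 0 then 1 else 0),
      zero = (\<lambda>c. 0),
      add = (\<lambda>f g c. f c + g c)\<rparr>"

definition monomial :: "int ^ 'd \<Rightarrow> (int ^ 'd \<Rightarrow> 'k::field)" where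
  "monomial a = (\<lambda>c. if c = a then 1 else 0)"

definition tfr_prime ::
    "(real ^ 'd) set set \<Rightarrow> ((real ^ 'd) set \<Rightarrow> (int ^ 'd) set) \<Rightarrow> (real ^ 'd) set
       \<Rightarrow> (int ^ 'd \<Rightarrow> 'k::field) set" where
  "tfr_prime \<Sigma> M C = genideal (toric_face_ring \<Sigma> M)
      {monomial a | a. a \<in> mc_support \<Sigma> M - M C}"

fun ideal_sum :: "('a, 'b) ring_scheme \<Rightarrow> (nat \<Rightarrow> 'a set) \<Rightarrow> nat \<Rightarrow> 'a set" where
  "ideal_sum R I 0 = {\<zero>\<^bsub>R\<^esub>}"
| "ideal_sum R I (Suc 0) = I 1"
| "ideal_sum R I (Suc (Suc n)) = ideal_sum R I (Suc n) <+>\<^bsub>R\<^esub> I (Suc (Suc n))"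

end

theory Submission
  imports Defs
begin

lemma monoid_gen_add: "x \<in> monoid_gen G \<Longrightarrow> y \<in> monoid_gen G \<Longrightarrow> x + y \<in> monoid_gen G"
  by (induction x rule: monoid_gen.induct) (auto simp: add.assoc intro: monoid_gen.add)

lemma real_vec_add: "real_vec (a + b) = real_vec a + real_vec b"
  by (simp add: real_vec_def vec_eq_iff)

lemma real_vec_zero: "real_vec 0 = 0"
  by (simp add: real_vec_def vec_eq_iff)

locale tfr =
  fixes \<Sigma> :: "(real ^ 'd) set set" and M :: "(real ^ 'd) set \<Rightarrow> (int ^ 'd) set"
  assumes fan: "rational_pointed_fan \<Sigma>" and mc: "monoidal_complex \<Sigma> M" and ne: "\<Sigma> \<noteq> {}"
begin

lemma M_add: "C \<in> \<Sigma> \<Longrightarrow> a \<in> M C \<Longrightarrow> b \<in> M C \<Longrightarrow> a + b \<in> M C"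
  using mc unfolding monoidal_complex_def affine_monoid_def by (metis monoid_gen_add)

lemma M_zero: "C \<in> \<Sigma> \<Longrightarrow> 0 \<in> M C"
  using mc unfolding monoidal_complex_def affine_monoid_def by (metis monoid_gen.zero)

lemma M_sub: "C \<in> \<Sigma> \<Longrightarrow> a \<in> M C \<Longrightarrow> real_vec a \<in> C"
  using mc unfolding monoidal_complex_def by (metis hull_subset image_subset_iff)

lemma conic_C: "C \<in> \<Sigma> \<Longrightarrow> conic C"
  using mc unfolding monoidal_complex_def by (metis convex_cone_convex_cone_hull convex_cone_def)

lemma zero_C: "C \<in> \<Sigma> \<Longrightarrow> 0 \<in> C"
  using M_sub[OF _ M_zero] real_vec_zero by metis

lemma inter_in: "C \<in> \<Sigma> \<Longrightarrow> C' \<in> \<Sigma> \<Longrightarrow> C \<inter> C' \<in> \<Sigma>"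
  using fan zero_C unfolding rational_pointed_fan_def by blast

lemma M_restrict: "C \<in> \<Sigma> \<Longrightarrow> C' \<in> \<Sigma> \<Longrightarrow> C' \<subseteq> C \<Longrightarrow> M C' = M C \<inter> {a. real_vec a \<in> C'}"
  using mc unfolding monoidal_complex_def by blast

lemma M_inter: "C \<in> \<Sigma> \<Longrightarrow> C' \<in> \<Sigma> \<Longrightarrow> M (C \<inter> C') = M C \<inter> M C'"
proof -
  assume a: "C \<in> \<Sigma>" "C' \<in> \<Sigma>"
  have 1: "M (C \<inter> C') = M C \<inter> {a. real_vec a \<in> C \<inter> C'}"
    using M_restrict[OF a(1) inter_in[OF a]] by blast
  have 2: "M (C \<inter> C') = M C' \<inter> {a. real_vec a \<in> C \<inter> C'}"
    using M_restrict[OF a(2) inter_in[OF a]] by blast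
  show ?thesis using 1 2 M_sub a by blast
qed

lemma key: assumes "C \<in> \<Sigma>" "C' \<in> \<Sigma>" "p \<in> M C'" "q \<in> M C'" "p + q \<in> M C"
  shows "p \<in> M C \<and> q \<in> M C"
proof -
  let ?F = "C \<inter> C'"
  have F: "?F \<in> \<Sigma>" using inter_in assms by blast
  have face: "?F face_of C'" using fan assms unfolding rational_pointed_fan_def by blast
  have cF: "conic ?F" using conic_C F by blast
  have rp: "real_vec p \<in> C'" and rq: "real_vec q \<in> C'" using M_sub assms by auto
  have "real_vec (p + q) \<in> ?F" using M_sub[OF assms(1) assms(5)] M_sub[OF assms(2) M_add[OF assms(2,3,4)]] by blast
  then have mid: "midpoint (real_vec p) (real_vec q) \<in> ?F"
    using cF unfolding midpoint_def conic_def real_vec_add by simp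
  have "real_vec p \<in> ?F \<and> real_vec q \<in> ?F"
  proof (cases "real_vec p = real_vec q")
    case True then show ?thesis using mid by simp
  next
    case False
    then have "midpoint (real_vec p) (real_vec q) \<in> open_segment (real_vec p) (real_vec q)"
      by (simp add: midpoint_in_open_segment)
    then show ?thesis using face mid rp rq unfolding face_of_def by blast
  qed
  then have "p \<in> M ?F \<and> q \<in> M ?F" using M_restrict[OF assms(2) F] assms by blast
  then show ?thesis using M_inter assms by blast
qed

definition compat :: "int ^ 'd \<Rightarrow> int ^ 'd \<Rightarrow> bool" where
  "compat a b \<longleftrightarrow> (\<exists>C\<in>\<Sigma>. a \<in> M C \<and> b \<in> M C)"

definition compat3 :: "int ^ 'd \<Rightarrow> int ^ 'd \<Rightarrow> int ^ 'd \<Rightarrow> bool" where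
  "compat3 a b e \<longleftrightarrow> (\<exists>C\<in>\<Sigma>. a \<in> M C \<and> b \<in> M C \<and> e \<in> M C)"

lemma compat_sym: "compat a b = compat b a"
  unfolding compat_def by blast

lemma compat3_iff: "(compat a b \<and> compat (a + b) e) = compat3 a b e"
proof
  assume "compat a b \<and> compat (a + b) e"
  then obtain C1 C2 where c: "C1 \<in> \<Sigma>" "a \<in> M C1" "b \<in> M C1" "C2 \<in> \<Sigma>" "a + b \<in> M C2" "e \<in> M C2"
    unfolding compat_def by blast
  then show "compat3 a b e" using key[of C2 C1 a b] unfolding compat3_def by blast
next
  assume "compat3 a b e"
  then show "compat a b \<and> compat (a + b) e" unfolding compat3_def compat_def using M_add by blast
qed

lemma compat3_sym: "compat3 a b e = compat3 e b a"
  unfolding compat3_def by blast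

definition conv :: "(int ^ 'd) set \<Rightarrow> (int ^ 'd) set \<Rightarrow> (int ^ 'd \<Rightarrow> 'k::field) \<Rightarrow> (int ^ 'd \<Rightarrow> 'k) \<Rightarrow> int ^ 'd \<Rightarrow> 'k" where
  "conv A B f g c = (\<Sum>a\<in>A. \<Sum>b\<in>B. if a + b = c \<and> compat a b then f a * g b else 0)"

lemma carrier_R: "(f \<in> carrier (toric_face_ring \<Sigma> M)) = (finite {a. f a \<noteq> 0} \<and> {a. f a \<noteq> 0} \<subseteq> mc_support \<Sigma> M)"
  by (simp add: toric_face_ring_def)

lemma mult_R: "f \<otimes>\<^bsub>toric_face_ring \<Sigma> M\<^esub> g = (\<lambda>c. \<Sum>p\<in>{(a, b). f a \<noteq> 0 \<and> g b \<noteq> 0 \<and> a + b = c \<and> compat a b}. f (fst p) * g (snd p))"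
  by (simp add: toric_face_ring_def compat_def)

lemma add_R: "f \<oplus>\<^bsub>toric_face_ring \<Sigma> M\<^esub> g = (\<lambda>c. f c + g c)"
  by (simp add: toric_face_ring_def)

lemma zero_R: "\<zero>\<^bsub>toric_face_ring \<Sigma> M\<^esub> = (\<lambda>c. 0)"
  by (simp add: toric_face_ring_def)

lemma one_R: "\<one>\<^bsub>toric_face_ring \<Sigma> M\<^esub> = (\<lambda>c. if c = 0 then 1 else 0)"
  by (simp add: toric_face_ring_def)

lemma mult_conv:
  assumes "finite A" "finite B" "{a. f a \<noteq> 0} \<subseteq> A" "{b. g b \<noteq> 0} \<subseteq> B"
  shows "(f \<otimes>\<^bsub>toric_face_ring \<Sigma> M\<^esub> g) c = conv A B f g c"
proof -
  have "conv A B f g c = (\<Sum>p\<in>A \<times> B. if fst p + snd p = c \<and> compat (fst p) (snd p) then f (fst p) * g (snd p) else 0)"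
    unfolding conv_def by (simp add: sum.cartesian_product case_prod_beta)
  also have "\<dots> = (\<Sum>p\<in>{(a, b). f a \<noteq> 0 \<and> g b \<noteq> 0 \<and> a + b = c \<and> compat a b}. f (fst p) * g (snd p))"
    by (rule sum.mono_neutral_cong_right) (use assms in auto)
  finally show ?thesis by (simp add: mult_R)
qed

lemma mult_supp: "(f \<otimes>\<^bsub>toric_face_ring \<Sigma> M\<^esub> g) c \<noteq> 0 \<Longrightarrow> \<exists>a b. f a \<noteq> 0 \<and> g b \<noteq> 0 \<and> a + b = c \<and> compat a b"
proof (rule ccontr)
  assume "(f \<otimes>\<^bsub>toric_face_ring \<Sigma> M\<^esub> g) c \<noteq> 0" "\<not> (\<exists>a b. f a \<noteq> 0 \<and> g b \<noteq> 0 \<and> a + b = c \<and> compat a b)"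
  then have "{(a, b). f a \<noteq> 0 \<and> g b \<noteq> 0 \<and> a + b = c \<and> compat a b} = {}" by auto
  with \<open>(f \<otimes>\<^bsub>toric_face_ring \<Sigma> M\<^esub> g) c \<noteq> 0\<close> show False by (simp add: mult_R)
qed

lemma mult_comm: "f \<otimes>\<^bsub>toric_face_ring \<Sigma> M\<^esub> g = g \<otimes>\<^bsub>toric_face_ring \<Sigma> M\<^esub> f"
  unfolding mult_R
proof (rule ext)
  fix c
  show "(\<Sum>p\<in>{(a, b). f a \<noteq> 0 \<and> g b \<noteq> 0 \<and> a + b = c \<and> compat a b}. f (fst p) * g (snd p)) =
        (\<Sum>p\<in>{(a, b). g a \<noteq> 0 \<and> f b \<noteq> 0 \<and> a + b = c \<and> compat a b}. g (fst p) * f (snd p))"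
    by (rule sum.reindex_bij_witness[of _ prod.swap prod.swap]) (auto simp: compat_sym add.commute)
qed

lemma supp_mult_sub:
  "{c. (f \<otimes>\<^bsub>toric_face_ring \<Sigma> M\<^esub> g) c \<noteq> 0} \<subseteq> (\<lambda>p. fst p + snd p) ` ({a. f a \<noteq> 0} \<times> {b. g b \<noteq> 0})"
proof
  fix c assume "c \<in> {c. (f \<otimes>\<^bsub>toric_face_ring \<Sigma> M\<^esub> g) c \<noteq> 0}"
  then obtain a b where "f a \<noteq> 0" "g b \<noteq> 0" "a + b = c" using mult_supp by blast
  then show "c \<in> (\<lambda>p. fst p + snd p) ` ({a. f a \<noteq> 0} \<times> {b. g b \<noteq> 0})"
    by (intro image_eqI[of _ _ "(a, b)"]) auto
qed

lemma mult_closed: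
  assumes "f \<in> carrier (toric_face_ring \<Sigma> M)" "g \<in> carrier (toric_face_ring \<Sigma> M)"
  shows "f \<otimes>\<^bsub>toric_face_ring \<Sigma> M\<^esub> g \<in> carrier (toric_face_ring \<Sigma> M)"
proof -
  let ?h = "f \<otimes>\<^bsub>toric_face_ring \<Sigma> M\<^esub> g"
  have sub: "{c. ?h c \<noteq> 0} \<subseteq> (\<lambda>p. fst p + snd p) ` ({a. f a \<noteq> 0} \<times> {b. g b \<noteq> 0})"
    by (rule supp_mult_sub)
  have fin: "finite {c. ?h c \<noteq> 0}"
    by (rule finite_subset[OF sub]) (use assms in \<open>simp add: carrier_R\<close>)
  have "{c. ?h c \<noteq> 0} \<subseteq> mc_support \<Sigma> M"
  proof
    fix c assume "c \<in> {c. ?h c \<noteq> 0}"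
    then obtain a b where "a + b = c" "compat a b" using mult_supp by blast
    then show "c \<in> mc_support \<Sigma> M" unfolding compat_def mc_support_def using M_add by blast
  qed
  with fin show ?thesis by (simp add: carrier_R)
qed


lemma sum3_rot: "(\<Sum>x\<in>X. \<Sum>y\<in>Y. \<Sum>z\<in>Z. F x y z) = (\<Sum>y\<in>Y. \<Sum>z\<in>Z. \<Sum>x\<in>X. F x y z)"
proof -
  have "(\<Sum>x\<in>X. \<Sum>y\<in>Y. \<Sum>z\<in>Z. F x y z) = (\<Sum>y\<in>Y. \<Sum>x\<in>X. \<Sum>z\<in>Z. F x y z)" by (rule sum.swap)
  also have "\<dots> = (\<Sum>y\<in>Y. \<Sum>z\<in>Z. \<Sum>x\<in>X. F x y z)" by (rule sum.cong[OF refl], rule sum.swap)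
  finally show ?thesis .
qed

lemma assoc_left:
  assumes "f \<in> carrier (toric_face_ring \<Sigma> M)" "g \<in> carrier (toric_face_ring \<Sigma> M)" "h \<in> carrier (toric_face_ring \<Sigma> M)"
  shows "((f \<otimes>\<^bsub>toric_face_ring \<Sigma> M\<^esub> g) \<otimes>\<^bsub>toric_face_ring \<Sigma> M\<^esub> h) d =
     (\<Sum>e\<in>{e. h e \<noteq> 0}. \<Sum>a\<in>{a. f a \<noteq> 0}. \<Sum>b\<in>{b. g b \<noteq> 0}.
        if a + b + e = d \<and> compat3 a b e then f a * g b * h e else 0)"
proof -
  define A where "A = {a. f a \<noteq> 0}"
  define B where "B = {a. g a \<noteq> 0}"
  define E where "E = {a. h a \<noteq> 0}"
  define U where "U = (\<lambda>p. fst p + snd p) ` (A \<times> B)"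
  have fA: "finite A" and fB: "finite B" and fE: "finite E"
    using assms by (auto simp: carrier_R A_def B_def E_def)
  have fU: "finite U" using fA fB U_def by simp
  have "((f \<otimes>\<^bsub>toric_face_ring \<Sigma> M\<^esub> g) \<otimes>\<^bsub>toric_face_ring \<Sigma> M\<^esub> h) d
      = (\<Sum>u\<in>U. \<Sum>e\<in>E. if u + e = d \<and> compat u e then (f \<otimes>\<^bsub>toric_face_ring \<Sigma> M\<^esub> g) u * h e else 0)"
    using mult_conv[OF fU fE] supp_mult_sub[of f g] unfolding U_def A_def B_def E_def conv_def by auto
  also have "\<dots> = (\<Sum>u\<in>U. \<Sum>e\<in>E. if u + e = d \<and> compat u e then conv A B f g u * h e else 0)"
  proof -
    have fg: "\<And>u. (f \<otimes>\<^bsub>toric_face_ring \<Sigma> M\<^esub> g) u = conv A B f g u"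
      by (intro mult_conv[OF fA fB]) (auto simp: A_def B_def)
    show ?thesis unfolding fg by (rule refl)
  qed
  also have "\<dots> = (\<Sum>e\<in>E. \<Sum>u\<in>U. if u + e = d \<and> compat u e then conv A B f g u * h e else 0)"
    by (rule sum.swap)
  also have "\<dots> = (\<Sum>e\<in>E. \<Sum>u\<in>U. \<Sum>a\<in>A. \<Sum>b\<in>B.
        if u + e = d \<and> compat u e \<and> a + b = u \<and> compat a b then f a * g b * h e else 0)"
    unfolding conv_def by (auto simp: sum_distrib_right intro!: sum.cong)
  also have "\<dots> = (\<Sum>e\<in>E. \<Sum>a\<in>A. \<Sum>b\<in>B. \<Sum>u\<in>U.
        if u + e = d \<and> compat u e \<and> a + b = u \<and> compat a b then f a * g b * h e else 0)"
    by (rule sum.cong[OF refl], rule sum3_rot)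
  also have "\<dots> = (\<Sum>e\<in>E. \<Sum>a\<in>A. \<Sum>b\<in>B.
        if a + b + e = d \<and> compat3 a b e then f a * g b * h e else 0)"
  proof (intro sum.cong refl)
    fix e a b assume ab: "a \<in> A" "b \<in> B"
    have "(\<Sum>u\<in>U. if u + e = d \<and> compat u e \<and> a + b = u \<and> compat a b then f a * g b * h e else 0)
        = (\<Sum>u\<in>U. if u = a + b then (if a + b + e = d \<and> compat3 a b e then f a * g b * h e else 0) else 0)"
      by (intro sum.cong refl) (auto simp: compat3_iff[symmetric])
    also have "\<dots> = (if a + b + e = d \<and> compat3 a b e then f a * g b * h e else 0)"
    proof -
      have "a + b \<in> U" unfolding U_def using ab by (intro image_eqI[of _ _ "(a, b)"]) auto
      then show ?thesis using fU by simp
    qed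
    finally show "(\<Sum>u\<in>U. if u + e = d \<and> compat u e \<and> a + b = u \<and> compat a b then f a * g b * h e else 0)
        = (if a + b + e = d \<and> compat3 a b e then f a * g b * h e else 0)" .
  qed
  finally show ?thesis unfolding A_def B_def E_def .
qed


lemma m_assoc:
  assumes "f \<in> carrier (toric_face_ring \<Sigma> M)" "g \<in> carrier (toric_face_ring \<Sigma> M)" "h \<in> carrier (toric_face_ring \<Sigma> M)"
  shows "(f \<otimes>\<^bsub>toric_face_ring \<Sigma> M\<^esub> g) \<otimes>\<^bsub>toric_face_ring \<Sigma> M\<^esub> h =
         f \<otimes>\<^bsub>toric_face_ring \<Sigma> M\<^esub> (g \<otimes>\<^bsub>toric_face_ring \<Sigma> M\<^esub> h)"
proof (rule ext)
  fix d
  have "(f \<otimes>\<^bsub>toric_face_ring \<Sigma> M\<^esub> (g \<otimes>\<^bsub>toric_face_ring \<Sigma> M\<^esub> h)) d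
      = ((h \<otimes>\<^bsub>toric_face_ring \<Sigma> M\<^esub> g) \<otimes>\<^bsub>toric_face_ring \<Sigma> M\<^esub> f) d"
    by (metis mult_comm)
  also have "\<dots> = (\<Sum>a\<in>{e. f e \<noteq> 0}. \<Sum>e\<in>{a. h a \<noteq> 0}. \<Sum>b\<in>{b. g b \<noteq> 0}.
        if e + b + a = d \<and> compat3 e b a then h e * g b * f a else 0)"
    by (rule assoc_left) (use assms in auto)
  also have "\<dots> = (\<Sum>e\<in>{a. h a \<noteq> 0}. \<Sum>a\<in>{e. f e \<noteq> 0}. \<Sum>b\<in>{b. g b \<noteq> 0}.
        if e + b + a = d \<and> compat3 e b a then h e * g b * f a else 0)"
    by (rule sum.swap)
  also have "\<dots> = (\<Sum>e\<in>{e. h e \<noteq> 0}. \<Sum>a\<in>{a. f a \<noteq> 0}. \<Sum>b\<in>{b. g b \<noteq> 0}.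
        if a + b + e = d \<and> compat3 a b e then f a * g b * h e else 0)"
    by (intro sum.cong refl) (simp add: compat3_sym[of a b e for a b e] ac_simps)
  also have "\<dots> = ((f \<otimes>\<^bsub>toric_face_ring \<Sigma> M\<^esub> g) \<otimes>\<^bsub>toric_face_ring \<Sigma> M\<^esub> h) d"
    by (rule assoc_left[symmetric]) (use assms in auto)
  finally show "((f \<otimes>\<^bsub>toric_face_ring \<Sigma> M\<^esub> g) \<otimes>\<^bsub>toric_face_ring \<Sigma> M\<^esub> h) d =
         (f \<otimes>\<^bsub>toric_face_ring \<Sigma> M\<^esub> (g \<otimes>\<^bsub>toric_face_ring \<Sigma> M\<^esub> h)) d" by simp
qed

lemma supp_add: "{c. f c + g c \<noteq> 0} \<subseteq> {c. f c \<noteq> 0} \<union> {c. g c \<noteq> (0::'k::field)}"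
  by auto

lemma add_closed:
  "f \<in> carrier (toric_face_ring \<Sigma> M) \<Longrightarrow> g \<in> carrier (toric_face_ring \<Sigma> M) \<Longrightarrow>
   f \<oplus>\<^bsub>toric_face_ring \<Sigma> M\<^esub> g \<in> carrier (toric_face_ring \<Sigma> M)"
  unfolding carrier_R add_R using supp_add[of f g] by (meson finite_UnI finite_subset le_sup_iff subset_trans)

lemma l_distr:
  assumes "f \<in> carrier (toric_face_ring \<Sigma> M)" "g \<in> carrier (toric_face_ring \<Sigma> M)" "h \<in> carrier (toric_face_ring \<Sigma> M)"
  shows "(f \<oplus>\<^bsub>toric_face_ring \<Sigma> M\<^esub> g) \<otimes>\<^bsub>toric_face_ring \<Sigma> M\<^esub> h =
     f \<otimes>\<^bsub>toric_face_ring \<Sigma> M\<^esub> h \<oplus>\<^bsub>toric_face_ring \<Sigma> M\<^esub> g \<otimes>\<^bsub>toric_face_ring \<Sigma> M\<^esub> h"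
proof (rule ext)
  fix c
  define A where "A = {c. f c \<noteq> 0} \<union> {c. g c \<noteq> 0}"
  define B where "B = {c. h c \<noteq> 0}"
  have fA: "finite A" and fB: "finite B" using assms by (auto simp: carrier_R A_def B_def)
  have 1: "((f \<oplus>\<^bsub>toric_face_ring \<Sigma> M\<^esub> g) \<otimes>\<^bsub>toric_face_ring \<Sigma> M\<^esub> h) c = conv A B (\<lambda>c. f c + g c) h c"
    unfolding add_R by (rule mult_conv[OF fA fB]) (auto simp: A_def B_def)
  have 2: "(f \<otimes>\<^bsub>toric_face_ring \<Sigma> M\<^esub> h) c = conv A B f h c"
    by (rule mult_conv[OF fA fB]) (auto simp: A_def B_def)
  have 3: "(g \<otimes>\<^bsub>toric_face_ring \<Sigma> M\<^esub> h) c = conv A B g h c"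
    by (rule mult_conv[OF fA fB]) (auto simp: A_def B_def)
  show "((f \<oplus>\<^bsub>toric_face_ring \<Sigma> M\<^esub> g) \<otimes>\<^bsub>toric_face_ring \<Sigma> M\<^esub> h) c =
     (f \<otimes>\<^bsub>toric_face_ring \<Sigma> M\<^esub> h \<oplus>\<^bsub>toric_face_ring \<Sigma> M\<^esub> g \<otimes>\<^bsub>toric_face_ring \<Sigma> M\<^esub> h) c"
    unfolding add_R[of "f \<otimes>\<^bsub>toric_face_ring \<Sigma> M\<^esub> h"] 1 2 3 conv_def
    by (simp add: sum.distrib[symmetric] distrib_right if_distrib cong: if_cong)
qed

lemma one_closed: "\<one>\<^bsub>toric_face_ring \<Sigma> M\<^esub> \<in> carrier (toric_face_ring \<Sigma> M)"
proof -
  obtain C where "C \<in> \<Sigma>" using ne by blast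
  then have "0 \<in> mc_support \<Sigma> M" using M_zero unfolding mc_support_def by blast
  then show ?thesis unfolding one_R carrier_R by auto
qed

lemma l_one:
  assumes "f \<in> carrier (toric_face_ring \<Sigma> M)"
  shows "\<one>\<^bsub>toric_face_ring \<Sigma> M\<^esub> \<otimes>\<^bsub>toric_face_ring \<Sigma> M\<^esub> f = f"
proof (rule ext)
  fix c
  define B where "B = {c. f c \<noteq> 0}"
  have fB: "finite B" using assms by (auto simp: carrier_R B_def)
  have "(\<one>\<^bsub>toric_face_ring \<Sigma> M\<^esub> \<otimes>\<^bsub>toric_face_ring \<Sigma> M\<^esub> f) c = conv {0} B (\<lambda>c. if c = 0 then 1 else 0) f c"
    unfolding one_R by (rule mult_conv) (use assms in \<open>auto simp: B_def carrier_R\<close>)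
  also have "\<dots> = (\<Sum>b\<in>B. if b = c then (if compat 0 c then f c else 0) else 0)"
  proof -
    have "conv {0} B (\<lambda>c. if c = 0 then 1 else 0) f c = (\<Sum>b\<in>B. if b = c \<and> compat 0 b then f b else 0)"
      by (simp add: conv_def) (rule sum.cong, auto)
    also have "\<dots> = (\<Sum>b\<in>B. if b = c then (if compat 0 c then f c else 0) else 0)"
      by (intro sum.cong refl) auto
    finally show ?thesis .
  qed
  also have "\<dots> = (if c \<in> B \<and> compat 0 c then f c else 0)"
    using fB by simp
  also have "\<dots> = f c"
  proof (cases "f c = 0")
    case False
    then have "c \<in> mc_support \<Sigma> M" using assms by (auto simp: carrier_R)
    then have "compat 0 c" unfolding mc_support_def compat_def using M_zero by blast
    then show ?thesis using False by (simp add: B_def)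
  qed simp
  finally show "(\<one>\<^bsub>toric_face_ring \<Sigma> M\<^esub> \<otimes>\<^bsub>toric_face_ring \<Sigma> M\<^esub> f) c = f c" .
qed

lemma ring_R: "ring (toric_face_ring \<Sigma> M :: (int ^ 'd \<Rightarrow> 'k::field) ring)"
proof (rule ringI)
  show "abelian_group (toric_face_ring \<Sigma> M :: (int ^ 'd \<Rightarrow> 'k::field) ring)"
  proof (rule abelian_groupI)
    fix x assume x: "x \<in> carrier (toric_face_ring \<Sigma> M :: (int ^ 'd \<Rightarrow> 'k::field) ring)"
    show "\<exists>y\<in>carrier (toric_face_ring \<Sigma> M). y \<oplus>\<^bsub>toric_face_ring \<Sigma> M\<^esub> x = \<zero>\<^bsub>toric_face_ring \<Sigma> M\<^esub>"
      by (rule bexI[of _ "\<lambda>c. - x c"]) (use x in \<open>auto simp: carrier_R add_R zero_R\<close>)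
  qed (fact add_closed | auto simp: carrier_R add_R zero_R add.assoc add.commute)+
  show "monoid (toric_face_ring \<Sigma> M :: (int ^ 'd \<Rightarrow> 'k::field) ring)"
    by (rule monoidI) (auto simp: mult_closed one_closed m_assoc l_one mult_comm[of _ "\<one>\<^bsub>toric_face_ring \<Sigma> M\<^esub>"])
qed (metis l_distr mult_comm)+

definition Qset :: "(int ^ 'd) set \<Rightarrow> (int ^ 'd \<Rightarrow> 'k::field) set" where
  "Qset S = {f \<in> carrier (toric_face_ring \<Sigma> M). \<forall>a. f a \<noteq> 0 \<longrightarrow> a \<notin> S}"

lemma a_inv_R:
  assumes "f \<in> carrier (toric_face_ring \<Sigma> M :: (int ^ 'd \<Rightarrow> 'k::field) ring)"
  shows "\<ominus>\<^bsub>toric_face_ring \<Sigma> M\<^esub> f = (\<lambda>c. - f c)"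
  by (rule abelian_group.minus_equality[OF ringE(1)[OF ring_R]]) (use assms in \<open>auto simp: carrier_R add_R zero_R\<close>)

lemma Q_ideal:
  assumes C: "C \<in> \<Sigma>"
  shows "ideal (Qset (M C) :: (int ^ 'd \<Rightarrow> 'k::field) set) (toric_face_ring \<Sigma> M)"
proof (rule idealI[OF ring_R])
  show "subgroup (Qset (M C) :: (int ^ 'd \<Rightarrow> 'k::field) set) (add_monoid (toric_face_ring \<Sigma> M))"
  proof (rule subgroup.intro)
    fix x assume x: "x \<in> (Qset (M C) :: (int ^ 'd \<Rightarrow> 'k::field) set)"
    then have xc: "x \<in> carrier (toric_face_ring \<Sigma> M)" by (simp add: Qset_def)
    have "inv\<^bsub>add_monoid (toric_face_ring \<Sigma> M)\<^esub> x = \<ominus>\<^bsub>toric_face_ring \<Sigma> M\<^esub> x"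
      by (simp add: a_inv_def)
    also have "\<dots> = (\<lambda>c. - x c)" by (rule a_inv_R[OF xc])
    finally show "inv\<^bsub>add_monoid (toric_face_ring \<Sigma> M)\<^esub> x \<in> Qset (M C)"
      using x by (auto simp: Qset_def carrier_R)
  qed (auto simp: Qset_def add_closed[unfolded add_R] zero_R carrier_R[of "\<lambda>c. 0"] add_R, metis add_0)
next
  fix a x :: "int ^ 'd \<Rightarrow> 'k" assume a: "a \<in> (Qset (M C) :: (int ^ 'd \<Rightarrow> 'k::field) set)" and x: "x \<in> carrier (toric_face_ring \<Sigma> M)"
  have ac: "a \<in> carrier (toric_face_ring \<Sigma> M)" using a by (simp add: Qset_def)
  have "\<forall>c. (x \<otimes>\<^bsub>toric_face_ring \<Sigma> M\<^esub> a) c \<noteq> 0 \<longrightarrow> c \<notin> M C"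
  proof (intro allI impI)
    fix c assume "(x \<otimes>\<^bsub>toric_face_ring \<Sigma> M\<^esub> a) c \<noteq> 0"
    then obtain p q where pq: "a q \<noteq> 0" "p + q = c" "compat p q" using mult_supp by blast
    show "c \<notin> M C"
    proof
      assume "c \<in> M C"
      then have "q \<in> M C" using pq key[OF C] unfolding compat_def by blast
      then show False using pq a by (auto simp: Qset_def)
    qed
  qed
  then show "x \<otimes>\<^bsub>toric_face_ring \<Sigma> M\<^esub> a \<in> Qset (M C)"
    using mult_closed[OF x ac] by (simp add: Qset_def)
  then show "a \<otimes>\<^bsub>toric_face_ring \<Sigma> M\<^esub> x \<in> Qset (M C)"
    by (simp add: mult_comm)
qed

lemma monomial_carrier: "a \<in> mc_support \<Sigma> M \<Longrightarrow> (monomial a :: int ^ 'd \<Rightarrow> 'k::field) \<in> carrier (toric_face_ring \<Sigma> M)"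
  by (simp add: carrier_R monomial_def)

lemma gens_Q: "{monomial a | a. a \<in> mc_support \<Sigma> M - M C} \<subseteq> (Qset (M C) :: (int ^ 'd \<Rightarrow> 'k::field) set)"
  by (auto simp: Qset_def monomial_carrier) (auto simp: monomial_def split: if_splits)

lemma Q_sub_ideal:
  assumes I: "ideal I (toric_face_ring \<Sigma> M :: (int ^ 'd \<Rightarrow> 'k::field) ring)"
    and gens: "{monomial a | a. a \<in> mc_support \<Sigma> M - M C} \<subseteq> I"
  shows "Qset (M C) \<subseteq> I"
proof -
  have main: "\<And>f :: int ^ 'd \<Rightarrow> 'k. f \<in> carrier (toric_face_ring \<Sigma> M) \<Longrightarrow> {c. f c \<noteq> 0} \<subseteq> A \<Longrightarrow> (\<forall>a. f a \<noteq> 0 \<longrightarrow> a \<notin> M C) \<Longrightarrow> f \<in> I"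
    if "finite A" for A
    using that
  proof (induction A rule: finite_induct)
    case empty
    then have "f = \<zero>\<^bsub>toric_face_ring \<Sigma> M\<^esub>" by (auto simp: zero_R)
    then show ?case using additive_subgroup.zero_closed[OF ideal.axioms(1)[OF I]] by simp
  next
    case (insert x A)
    define g where "g = f(x := 0)"
    define h where "h = (\<lambda>c. if c = x then f x else 0)"
    have fc: "finite {c. f c \<noteq> 0}" "{c. f c \<noteq> 0} \<subseteq> mc_support \<Sigma> M" using insert.prems(1) by (auto simp: carrier_R)
    have gc: "g \<in> carrier (toric_face_ring \<Sigma> M)" using fc unfolding carrier_R g_def
      by (auto intro: finite_subset[OF _ fc(1)])
    have gI: "g \<in> I" by (rule insert.IH[OF gc]) (use insert.prems in \<open>auto simp: g_def\<close>)
    have hI: "h \<in> I"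
    proof (cases "f x = 0")
      case True
      then have "h = \<zero>\<^bsub>toric_face_ring \<Sigma> M\<^esub>" by (auto simp: zero_R h_def)
      then show ?thesis using additive_subgroup.zero_closed[OF ideal.axioms(1)[OF I]] by simp
    next
      case False
      then have xs: "x \<in> mc_support \<Sigma> M" "x \<notin> M C" using fc insert.prems(3) by auto
      then have mI: "monomial x \<in> I" using gens by blast
      obtain C' where C': "C' \<in> \<Sigma>" "x \<in> M C'" using xs unfolding mc_support_def by blast
      define k where "k = (\<lambda>c::int ^ 'd. if c = 0 then f x else 0)"
      have "0 \<in> mc_support \<Sigma> M" using C' M_zero unfolding mc_support_def by blast
      then have kc: "k \<in> carrier (toric_face_ring \<Sigma> M)" by (auto simp: carrier_R k_def)
      have "k \<otimes>\<^bsub>toric_face_ring \<Sigma> M\<^esub> monomial x = h"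
      proof (rule ext)
        fix c
        have "(k \<otimes>\<^bsub>toric_face_ring \<Sigma> M\<^esub> monomial x) c = conv {0} {x} k (monomial x) c"
          by (rule mult_conv) (auto simp: k_def monomial_def)
        also have "\<dots> = h c"
          using C' M_zero by (auto simp: conv_def compat_def h_def k_def monomial_def)
        finally show "(k \<otimes>\<^bsub>toric_face_ring \<Sigma> M\<^esub> monomial x) c = h c" .
      qed
      then show ?thesis using ideal.I_l_closed[OF I mI kc] by simp
    qed
    have "f = g \<oplus>\<^bsub>toric_face_ring \<Sigma> M\<^esub> h" by (auto simp: add_R g_def h_def)
    then show ?case using additive_subgroup.a_closed[OF ideal.axioms(1)[OF I] gI hI] by simp
  qed
  show ?thesis
  proof
    fix f :: "int ^ 'd \<Rightarrow> 'k" assume "f \<in> Qset (M C)"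
    then show "f \<in> I" using main[of "{c. f c \<noteq> 0}"] by (auto simp: Qset_def carrier_R)
  qed
qed

lemma prime_eq:
  assumes C: "C \<in> \<Sigma>"
  shows "(tfr_prime \<Sigma> M C :: (int ^ 'd \<Rightarrow> 'k::field) set) = Qset (M C)"
proof
  interpret R: ring "toric_face_ring \<Sigma> M :: (int ^ 'd \<Rightarrow> 'k::field) ring" by (rule ring_R)
  have gc: "{monomial a | a. a \<in> mc_support \<Sigma> M - M C} \<subseteq> (carrier (toric_face_ring \<Sigma> M) :: (int ^ 'd \<Rightarrow> 'k::field) set)"
    using monomial_carrier by blast
  show "(tfr_prime \<Sigma> M C :: (int ^ 'd \<Rightarrow> 'k::field) set) \<subseteq> Qset (M C)"
    unfolding tfr_prime_def by (rule R.genideal_minimal[OF Q_ideal[OF C] gens_Q])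
  show "Qset (M C) \<subseteq> (tfr_prime \<Sigma> M C :: (int ^ 'd \<Rightarrow> 'k::field) set)"
    unfolding tfr_prime_def by (rule Q_sub_ideal[OF R.genideal_ideal[OF gc] R.genideal_self[OF gc]])
qed

lemma Q_add: "(Qset S :: (int ^ 'd \<Rightarrow> 'k::field) set) <+>\<^bsub>toric_face_ring \<Sigma> M\<^esub> Qset T = Qset (S \<inter> T)"
proof
  show "(Qset S :: (int ^ 'd \<Rightarrow> 'k::field) set) <+>\<^bsub>toric_face_ring \<Sigma> M\<^esub> Qset T \<subseteq> Qset (S \<inter> T)"
  proof
    fix f assume "f \<in> (Qset S :: (int ^ 'd \<Rightarrow> 'k::field) set) <+>\<^bsub>toric_face_ring \<Sigma> M\<^esub> Qset T"
    then obtain g h where gh: "g \<in> Qset S" "h \<in> Qset T" "f = g \<oplus>\<^bsub>toric_face_ring \<Sigma> M\<^esub> h"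
      by (auto simp: set_add_def set_mult_def)
    have "f \<in> carrier (toric_face_ring \<Sigma> M)" using gh add_closed by (auto simp: Qset_def)
    then show "f \<in> Qset (S \<inter> T)" using gh by (auto simp: Qset_def add_R) (metis add_0)
  qed
  show "Qset (S \<inter> T) \<subseteq> (Qset S :: (int ^ 'd \<Rightarrow> 'k::field) set) <+>\<^bsub>toric_face_ring \<Sigma> M\<^esub> Qset T"
  proof
    fix f :: "int ^ 'd \<Rightarrow> 'k" assume f: "f \<in> Qset (S \<inter> T)"
    define g where "g = (\<lambda>c. if c \<in> S then 0 else f c)"
    define h where "h = (\<lambda>c. if c \<in> S then f c else 0)"
    have fc: "finite {c. f c \<noteq> 0}" "{c. f c \<noteq> 0} \<subseteq> mc_support \<Sigma> M" using f by (auto simp: Qset_def carrier_R)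
    have "g \<in> Qset S" using fc unfolding Qset_def carrier_R g_def
      by (auto intro: finite_subset[OF _ fc(1)])
    moreover have "h \<in> Qset T" using fc f unfolding Qset_def carrier_R h_def
      by (auto intro: finite_subset[OF _ fc(1)])
    moreover have "f = g \<oplus>\<^bsub>toric_face_ring \<Sigma> M\<^esub> h" by (auto simp: add_R g_def h_def)
    ultimately show "f \<in> (Qset S :: (int ^ 'd \<Rightarrow> 'k::field) set) <+>\<^bsub>toric_face_ring \<Sigma> M\<^esub> Qset T"
      by (auto simp: set_add_def set_mult_def)
  qed
qed

lemma Q_Inter: "I \<noteq> {} \<Longrightarrow> (\<Inter>i\<in>I. (Qset (S i) :: (int ^ 'd \<Rightarrow> 'k::field) set)) = Qset (\<Union>i\<in>I. S i)"
  by (auto simp: Qset_def)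

end

theorem lemma2p3:
  fixes \<Sigma> :: "(real ^ 'd) set set"
    and M :: "(real ^ 'd) set \<Rightarrow> (int ^ 'd) set"
    and C :: "nat \<Rightarrow> (real ^ 'd) set"
    and D :: "(real ^ 'd) set"
    and j :: nat
  assumes "rational_pointed_fan \<Sigma>"
    and "monoidal_complex \<Sigma> M"
    and "j \<ge> 1"
    and "\<forall>i\<in>{1..j}. C i \<in> \<Sigma>"
    and "D \<in> \<Sigma>"
  shows "(tfr_prime \<Sigma> M (\<Inter>i\<in>{1..j}. C i) :: (int ^ 'd \<Rightarrow> 'k::field) set)
           = ideal_sum (toric_face_ring \<Sigma> M) (\<lambda>i. tfr_prime \<Sigma> M (C i)) j
       \<and> (\<forall>t. 1 \<le> t \<and> t \<le> j \<longrightarrow>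
            (tfr_prime \<Sigma> M D <+>\<^bsub>(toric_face_ring \<Sigma> M :: (int ^ 'd \<Rightarrow> 'k) ring)\<^esub>
               (\<Inter>i\<in>{1..t}. tfr_prime \<Sigma> M (C i)))
            = (\<Inter>i\<in>{1..t}. tfr_prime \<Sigma> M D <+>\<^bsub>toric_face_ring \<Sigma> M\<^esub> tfr_prime \<Sigma> M (C i)))"
proof -
  interpret tfr \<Sigma> M using assms(1,2,5) by unfold_locales auto
  have capn: "(\<Inter>i\<in>{1..n}. C i) \<in> \<Sigma> \<and> M (\<Inter>i\<in>{1..n}. C i) = (\<Inter>i\<in>{1..n}. M (C i))"
    if "1 \<le> n" "n \<le> j" for n
    using that
  proof (induction n)
    case 0 then show ?case by simp
  next
    case (Suc n)
    show ?case
    proof (cases "n = 0")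
      case True then show ?thesis using Suc assms(4) by auto
    next
      case False
      then have ih: "(\<Inter>i\<in>{1..n}. C i) \<in> \<Sigma> \<and> M (\<Inter>i\<in>{1..n}. C i) = (\<Inter>i\<in>{1..n}. M (C i))"
        using Suc by auto
      have cs: "C (Suc n) \<in> \<Sigma>" using Suc assms(4) by auto
      have e: "{1..Suc n} = insert (Suc n) {1..n}" by auto
      show ?thesis unfolding e using ih cs inter_in M_inter by (simp add: Int_commute)
    qed
  qed
  have sumn: "ideal_sum (toric_face_ring \<Sigma> M) (\<lambda>i. tfr_prime \<Sigma> M (C i)) n
      = (Qset (\<Inter>i\<in>{1..n}. M (C i)) :: (int ^ 'd \<Rightarrow> 'k) set)"
    if "1 \<le> n" "n \<le> j" for n
    using that
  proof (induction n)
    case 0 then show ?case by simp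
  next
    case (Suc n)
    show ?case
    proof (cases n)
      case 0
      have "C 1 \<in> \<Sigma>" using Suc.prems assms(4) by auto
      then show ?thesis using 0 by (simp add: prime_eq)
    next
      case (Suc m)
      have ih: "ideal_sum (toric_face_ring \<Sigma> M) (\<lambda>i. tfr_prime \<Sigma> M (C i)) (Suc m)
          = (Qset (\<Inter>i\<in>{1..Suc m}. M (C i)) :: (int ^ 'd \<Rightarrow> 'k) set)"
        using Suc.IH Suc.prems Suc by auto
      have cs: "C (Suc (Suc m)) \<in> \<Sigma>" using Suc.prems Suc assms(4) by auto
      have e: "{1..Suc (Suc m)} = insert (Suc (Suc m)) {1..Suc m}" by auto
      show ?thesis unfolding Suc ideal_sum.simps ih prime_eq[OF cs] Q_add e
        by (simp add: Int_commute)
    qed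
  qed
  have part1: "(tfr_prime \<Sigma> M (\<Inter>i\<in>{1..j}. C i) :: (int ^ 'd \<Rightarrow> 'k::field) set)
           = ideal_sum (toric_face_ring \<Sigma> M) (\<lambda>i. tfr_prime \<Sigma> M (C i)) j"
  proof -
    have c1: "(\<Inter>i\<in>{1..j}. C i) \<in> \<Sigma>" and c2: "M (\<Inter>i\<in>{1..j}. C i) = (\<Inter>i\<in>{1..j}. M (C i))"
      using capn[OF assms(3) order.refl] by auto
    show ?thesis unfolding prime_eq[OF c1] c2 sumn[OF assms(3) order.refl] ..
  qed
  have part2: "(tfr_prime \<Sigma> M D <+>\<^bsub>(toric_face_ring \<Sigma> M :: (int ^ 'd \<Rightarrow> 'k) ring)\<^esub>
               (\<Inter>i\<in>{1..t}. tfr_prime \<Sigma> M (C i)))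
            = (\<Inter>i\<in>{1..t}. tfr_prime \<Sigma> M D <+>\<^bsub>toric_face_ring \<Sigma> M\<^esub> tfr_prime \<Sigma> M (C i))"
    if t: "1 \<le> t" "t \<le> j" for t
  proof -
    have ne: "{1..t} \<noteq> {}" using t by auto
    have cs: "\<And>i. i \<in> {1..t} \<Longrightarrow> C i \<in> \<Sigma>" using t assms(4) by auto
    have "(\<Inter>i\<in>{1..t}. tfr_prime \<Sigma> M (C i)) = (\<Inter>i\<in>{1..t}. (Qset (M (C i)) :: (int ^ 'd \<Rightarrow> 'k) set))"
      by (intro INF_cong refl) (rule prime_eq[OF cs])
    also have "\<dots> = Qset (\<Union>i\<in>{1..t}. M (C i))" by (rule Q_Inter[OF ne])
    finally have l: "(\<Inter>i\<in>{1..t}. tfr_prime \<Sigma> M (C i)) = (Qset (\<Union>i\<in>{1..t}. M (C i)) :: (int ^ 'd \<Rightarrow> 'k) set)" .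
    have "(\<Inter>i\<in>{1..t}. (tfr_prime \<Sigma> M D :: (int ^ 'd \<Rightarrow> 'k) set) <+>\<^bsub>toric_face_ring \<Sigma> M\<^esub> tfr_prime \<Sigma> M (C i))
        = (\<Inter>i\<in>{1..t}. (Qset (M D \<inter> M (C i)) :: (int ^ 'd \<Rightarrow> 'k) set))"
      by (intro INF_cong refl) (simp only: prime_eq[OF cs] prime_eq[OF assms(5)] Q_add)
    also have "\<dots> = Qset (\<Union>i\<in>{1..t}. M D \<inter> M (C i))" by (rule Q_Inter[OF ne])
    finally show ?thesis unfolding l prime_eq[OF assms(5)] Q_add by (simp only: Int_UN_distrib)
  qed
  show ?thesis using part1 part2 by blast
qed

end
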